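(* Let $f\in\mathcal O_{\mathbb C^3,0}$, let $F_n$ be a compact two-dimensional face of $\Gamma_+(f)$ and $F_{n'}$ another two-dimensional face (compact or not) with $F_n\cap F_{n'}=[p_1,p_2]$ an edge of $F_n$. Let $q_1,q_2$ be the integral points of $\partial F_n$ such that $[p_1,q_1]$ and $[p_2,q_2]$ are the primitive segments of $\partial F_n$ adjacent to $[p_1,p_2]$ (i.e. lying on the other edges of $F_n$ through $p_1$, resp. $p_2$), and set $\alpha_1=\ell_{n'}(q_1-p_1)$, $\alpha_2=\ell_{n'}(q_2-p_2)$. If $p_1$ is a regular vertex of $F_n$, then $\alpha_{n,n'}=\alpha_1$ and $\alpha_1\mid\alpha_2$.
   Context: $\Gamma_+(f)=\operatorname{conv}\bigcup_{p\in\operatorname{supp}f}(p+\mathbb R^3_{\ge0})$. For a two-dimensional face $F_m$ of $\Gamma_+(f)$, $\ell_m$ is the primitive integral linear function on $\mathbb R^3$ whose minimal set on $\Gamma_+(f)$ is $F_m$. $\alpha_{n,n'}$ is the content (gcd of coordinates) of the cross product $\ell_n\times\ell_{n'}$ of the coefficient vectors. The face $F_n$ is regarded as an integral polygon in the affine plane $H$ containing it with lattice $H\cap\mathbb Z^3$; a vertex is regular if the primitive lattice vectors along its two edges form a basis of that lattice; a segment is primitive if its endpoints are lattice points and it contains no other lattice point. *)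

theory Defs
  imports "HOL-Analysis.Analysis"
begin

type_synonym germ3 = "nat \<times> nat \<times> nat \<Rightarrow> complex"
type_synonym ivec3 = "int \<times> int \<times> int"

text \<open>A germ in O_{C^3,0} is given by its Taylor coefficients f(a,b,c) (coefficient of
  x^a y^b z^c), subject to convergence on some polydisc.\<close>
definition convergent_germ :: "germ3 \<Rightarrow> bool" where
  "convergent_germ f \<longleftrightarrow>
     (\<exists>r::real. r > 0 \<and> (\<lambda>(a,b,c). norm (f (a,b,c)) * r ^ (a+b+c)) summable_on UNIV)"

definition supp :: "germ3 \<Rightarrow> (nat \<times> nat \<times> nat) set" where
  "supp f = {p. f p \<noteq> 0}"

definition pt :: "nat \<times> nat \<times> nat \<Rightarrow> real^3" where
  "pt p = (case p of (a,b,c) \<Rightarrow> vector [real a, real b, real c])"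

definition newton_poly :: "germ3 \<Rightarrow> (real^3) set" where
  "newton_poly f = convex hull (\<Union>p\<in>supp f. {x. \<forall>i. pt p $ i \<le> x $ i})"

definition integral_pt :: "real^3 \<Rightarrow> bool" where
  "integral_pt x \<longleftrightarrow> (\<forall>i. x $ i \<in> \<int>)"

definition lin :: "ivec3 \<Rightarrow> real^3 \<Rightarrow> real" where
  "lin l x = (case l of (a,b,c) \<Rightarrow> of_int a * x$1 + of_int b * x$2 + of_int c * x$3)"

definition content :: "ivec3 \<Rightarrow> int" where
  "content l = (case l of (a,b,c) \<Rightarrow> gcd (gcd a b) c)"

definition cross_i :: "ivec3 \<Rightarrow> ivec3 \<Rightarrow> ivec3" where
  "cross_i l m = (case l of (a1,a2,a3) \<Rightarrow> case m of (b1,b2,b3) \<Rightarrow>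
      (a2*b3 - a3*b2, a3*b1 - a1*b3, a1*b2 - a2*b1))"

definition prim_normal :: "(real^3) set \<Rightarrow> (real^3) set \<Rightarrow> ivec3 \<Rightarrow> bool" where
  "prim_normal G F l \<longleftrightarrow> content l = 1 \<and> F = {x\<in>G. \<forall>y\<in>G. lin l x \<le> lin l y}"

definition two_face :: "(real^3) set \<Rightarrow> (real^3) set \<Rightarrow> bool" where
  "two_face G F \<longleftrightarrow> F face_of G \<and> aff_dim F = 2"

definition is_edge :: "(real^3) set \<Rightarrow> (real^3) set \<Rightarrow> bool" where
  "is_edge E F \<longleftrightarrow> E face_of F \<and> aff_dim E = 1"

definition primitive_seg :: "real^3 \<Rightarrow> real^3 \<Rightarrow> bool" where
  "primitive_seg a b \<longleftrightarrow> integral_pt a \<and> integral_pt b \<and> a \<noteq> b \<and>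
     (\<forall>z\<in>closed_segment a b. integral_pt z \<longrightarrow> z = a \<or> z = b)"

definition regular_vertex :: "(real^3) set \<Rightarrow> real^3 \<Rightarrow> bool" where
  "regular_vertex F v \<longleftrightarrow> v extreme_point_of F \<and> integral_pt v \<and>
     (\<forall>E E' w w'. is_edge E F \<and> is_edge E' F \<and> E \<noteq> E' \<and> v \<in> E \<and> v \<in> E' \<and>
        w \<in> E \<and> w' \<in> E' \<and> primitive_seg v w \<and> primitive_seg v w' \<longrightarrow>
        (\<forall>z\<in>affine hull F. integral_pt z \<longrightarrow>
           (\<exists>a b::int. z - v = of_int a *\<^sub>R (w - v) + of_int b *\<^sub>R (w' - v))))"

end

theory Submission
  imports Defs
begin

lemma cross_comb:
  fixes a b c d e2 e3 w2 w3 :: int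
  shows "(a * e2+b * w2) * (c * e3+d * w3) - (a * e3+b * w3) * (c * e2+d * w2) = (a * d - b * c) * (e2 * w3 - e3 * w2)"
  by algebra

lemma bez3:
  fixes l1 l2 l3 :: int
  assumes "gcd (gcd l1 l2) l3 = 1"
  shows "\<exists>c1 c2 c3. c1 * l1+c2 * l2+c3 * l3 = 1"
proof -
  obtain u v where uv: "u  *  gcd l1 l2 + v  *  l3 = 1" using bezout_int[of "gcd l1 l2" l3] assms by auto
  obtain x y where xy: "x * l1 + y * l2 = gcd l1 l2" using bezout_int[of l1 l2] by auto
  show ?thesis apply (rule exI[of _ "u * x"], rule exI[of _ "u * y"], rule exI[of _ v])
    using uv xy by (metis (no_types, lifting) distrib_left mult.assoc)
qed

lemma core:
  fixes l1 l2 l3 m1 m2 m3 e1 e2 e3 w1 w2 w3 :: int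
  assumes g: "gcd (gcd l1 l2) l3 = 1"
    and le: "l1 * e1+l2 * e2+l3 * e3 = 0" and lw: "l1 * w1+l2 * w2+l3 * w3 = 0"
    and me: "m1 * e1+m2 * e2+m3 * e3 = 0"
    and dec: "\<And>z1 z2 z3. l1 * z1+l2 * z2+l3 * z3 = 0 \<Longrightarrow>
        \<exists>a b. a * e1+b * w1 = z1 \<and> a * e2+b * w2 = z2 \<and> a * e3+b * w3 = z3"
  shows "\<exists>N. N * N = 1 \<and> l2 * m3 - l3 * m2 = - N * (m1 * w1+m2 * w2+m3 * w3) * e1
     \<and> l3 * m1 - l1 * m3 = - N * (m1 * w1+m2 * w2+m3 * w3) * e2
     \<and> l1 * m2 - l2 * m1 = - N * (m1 * w1+m2 * w2+m3 * w3) * e3"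
proof -
  define v1 where "v1 = e2 * w3 - e3 * w2"
  define v2 where "v2 = e3 * w1 - e1 * w3"
  define v3 where "v3 = e1 * w2 - e2 * w1"
  obtain a1 b1 where A1: "a1 * e1+b1 * w1 = 0" "a1 * e2+b1 * w2 = l3" "a1 * e3+b1 * w3 = -l2"
    using dec[of 0 l3 "-l2"] by (auto simp: algebra_simps)
  obtain a2 b2 where A2: "a2 * e1+b2 * w1 = -l3" "a2 * e2+b2 * w2 = 0" "a2 * e3+b2 * w3 = l1"
    using dec[of "-l3" 0 l1] by (auto simp: algebra_simps)
  obtain a3 b3 where A3: "a3 * e1+b3 * w1 = l2" "a3 * e2+b3 * w2 = -l1" "a3 * e3+b3 * w3 = 0"
    using dec[of l2 "-l1" 0] by (auto simp: algebra_simps)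
  define n1 where "n1 = a2 * b3 - b2 * a3"
  define n2 where "n2 = a3 * b1 - b3 * a1"
  define n3 where "n3 = a1 * b2 - b1 * a2"
  have X: "l1 * l1 = n1 * v1" "l1 * l2 = n1 * v2" "l1 * l3 = n1 * v3"
          "l2 * l1 = n2 * v1" "l2 * l2 = n2 * v2" "l2 * l3 = n2 * v3"
          "l3 * l1 = n3 * v1" "l3 * l2 = n3 * v2" "l3 * l3 = n3 * v3"
    unfolding n1_def n2_def n3_def v1_def v2_def v3_def
    using cross_comb[of a2 e2 b2 w2 a3 e3 b3 w3] cross_comb[of a2 e3 b2 w3 a3 e1 b3 w1]
      cross_comb[of a2 e1 b2 w1 a3 e2 b3 w2]
      cross_comb[of a3 e2 b3 w2 a1 e3 b1 w3] cross_comb[of a3 e3 b3 w3 a1 e1 b1 w1]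
      cross_comb[of a3 e1 b3 w1 a1 e2 b1 w2]
      cross_comb[of a1 e2 b1 w2 a2 e3 b2 w3] cross_comb[of a1 e3 b1 w3 a2 e1 b2 w1]
      cross_comb[of a1 e1 b1 w1 a2 e2 b2 w2]
    by (simp_all add: A1 A2 A3 algebra_simps)
  obtain c1 c2 c3 where c: "c1 * l1+c2 * l2+c3 * l3 = 1" using bez3[OF g] by blast
  define N where "N = c1 * n1+c2 * n2+c3 * n3"
  have L: "l1 = N * v1" "l2 = N * v2" "l3 = N * v3"
  proof -
    have "l1 = (c1 * l1+c2 * l2+c3 * l3) * l1" using c by simp
    also have "\<dots> = N * v1" unfolding N_def using X by (simp add: algebra_simps)
    finally show "l1 = N * v1" .
    have "l2 = (c1 * l1+c2 * l2+c3 * l3) * l2" using c by simp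
    also have "\<dots> = N * v2" unfolding N_def using X by (simp add: algebra_simps)
    finally show "l2 = N * v2" .
    have "l3 = (c1 * l1+c2 * l2+c3 * l3) * l3" using c by simp
    also have "\<dots> = N * v3" unfolding N_def using X by (simp add: algebra_simps)
    finally show "l3 = N * v3" .
  qed
  have "N dvd gcd (gcd l1 l2) l3" using L by (simp add: gcd_greatest)
  hence "N dvd 1" using g by simp
  hence "\<bar>N\<bar> = 1" by simp
  hence NN: "N * N = 1" by (metis abs_mult_self_eq mult_1)
  have S: "v1 = N * l1" "v2 = N * l2" "v3 = N * l3"
    using L NN by (simp_all add: mult.assoc[symmetric])
  define mw where "mw = m1 * w1 + m2 * w2 + m3 * w3"
  have T0: "v2 * m3 - v3 * m2 + mw * e1 = w1 * (m1 * e1 + m2 * e2 + m3 * e3)"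
     "v3 * m1 - v1 * m3 + mw * e2 = w2 * (m1 * e1 + m2 * e2 + m3 * e3)"
     "v1 * m2 - v2 * m1 + mw * e3 = w3 * (m1 * e1 + m2 * e2 + m3 * e3)"
    unfolding v1_def v2_def v3_def mw_def by (simp_all add: algebra_simps)
  have T: "v2 * m3 - v3 * m2 = - mw * e1" "v3 * m1 - v1 * m3 = - mw * e2" "v1 * m2 - v2 * m1 = - mw * e3"
    using T0 me by (simp_all add: eq_neg_iff_add_eq_0)
  show ?thesis
    apply (rule exI[of _ N])
  proof (intro conjI)
    show "N * N = 1" by (rule NN)
    have "N * (l2 * m3 - l3 * m2) = - mw * e1" using T(1) unfolding S by (simp add: algebra_simps)
    hence "N * N * (l2 * m3 - l3 * m2) = - N * mw * e1" by (metis mult.assoc mult_minus_left mult_minus_right)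
    thus "l2 * m3 - l3 * m2 = - N * (m1 * w1 + m2 * w2 + m3 * w3) * e1" using NN mw_def by simp
    have "N * (l3 * m1 - l1 * m3) = - mw * e2" using T(2) unfolding S by (simp add: algebra_simps)
    hence "N * N * (l3 * m1 - l1 * m3) = - N * mw * e2" by (metis mult.assoc mult_minus_left mult_minus_right)
    thus "l3 * m1 - l1 * m3 = - N * (m1 * w1 + m2 * w2 + m3 * w3) * e2" using NN mw_def by simp
    have "N * (l1 * m2 - l2 * m1) = - mw * e3" using T(3) unfolding S by (simp add: algebra_simps)
    hence "N * N * (l1 * m2 - l2 * m1) = - N * mw * e3" by (metis mult.assoc mult_minus_left mult_minus_right)
    thus "l1 * m2 - l2 * m1 = - N * (m1 * w1 + m2 * w2 + m3 * w3) * e3" using NN mw_def by simp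
  qed
qed


lemma int_floor: "x \<in> \<int> \<Longrightarrow> real_of_int \<lfloor>x\<rfloor> = x"
  by (metis Ints_cases floor_of_int)

lemma forall3: "(\<forall>i::3. P i) \<longleftrightarrow> P 1 \<and> P 2 \<and> P 3"
  by (metis exhaust_3)

lemma content_div:
  fixes d1 d2 d3 :: int
  assumes "gcd (gcd d1 d2) d3 = g" "g \<noteq> 0"
  shows "gcd (gcd (d1 div g) (d2 div g)) (d3 div g) = 1"
proof -
  have dv: "g dvd d1" "g dvd d2" "g dvd d3" using assms(1) by (metis gcd_dvd1 gcd_dvd2 dvd_trans)+
  define c where "c = gcd (gcd (d1 div g) (d2 div g)) (d3 div g)"
  have gp: "g > 0" using assms by (metis gcd_ge_0_int order_le_neq_trans)
  have "g = gcd (gcd (g * (d1 div g)) (g * (d2 div g))) (g * (d3 div g))" using dv assms(1) by simp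
  also have "\<dots> = g * c" unfolding c_def using gp by (simp add: gcd_mult_left)
  finally have "g = g * c" .
  thus ?thesis unfolding c_def using gp by simp
qed

lemma bez3': "gcd (gcd (l1::int) l2) l3 = 1 \<Longrightarrow> \<exists>c1 c2 c3. c1*l1+c2*l2+c3*l3 = 1"
  by (rule bez3)

lemma prim_exists:
  assumes ip: "integral_pt p" and iq: "integral_pt q" and pq: "p \<noteq> q"
  shows "\<exists>e. e \<in> closed_segment p q \<and> primitive_seg p e \<and>
    gcd (gcd (\<lfloor>e$1\<rfloor> - \<lfloor>p$1\<rfloor>) (\<lfloor>e$2\<rfloor> - \<lfloor>p$2\<rfloor>)) (\<lfloor>e$3\<rfloor> - \<lfloor>p$3\<rfloor>) = 1"
proof -
  have pint: "real_of_int \<lfloor>p$i\<rfloor> = p$i" "real_of_int \<lfloor>q$i\<rfloor> = q$i" for i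
    using ip iq unfolding integral_pt_def by (simp_all add: int_floor)
  define d where "d i = \<lfloor>q$i\<rfloor> - \<lfloor>p$i\<rfloor>" for i
  have dq: "q$i - p$i = of_int (d i)" for i by (simp only: d_def of_int_diff pint)
  define g where "g = gcd (gcd (d 1) (d 2)) (d 3)"
  have g0: "g \<noteq> 0"
  proof
    assume "g = 0"
    hence "d 1 = 0" "d 2 = 0" "d 3 = 0" unfolding g_def by auto
    hence "q$i = p$i" for i using dq[of i] exhaust_3[of i] by auto
    thus False using pq by (simp add: vec_eq_iff)
  qed
  have gpos: "g > 0" using g0 unfolding g_def by (metis gcd_ge_0_int order_le_neq_trans)
  define c where "c i = d i div g" for i
  have gdv: "g dvd d i" for i unfolding g_def using exhaust_3[of i]
    by (metis gcd_dvd1 gcd_dvd2 dvd_trans)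
  have dc: "d i = g * c i" for i using gdv[of i] unfolding c_def by simp
  have cg: "gcd (gcd (c 1) (c 2)) (c 3) = 1" unfolding c_def using content_div g_def g0 by blast
  define e where "e = p + (1 / real_of_int g) *\<^sub>R (q - p)"
  have ec: "e$i = p$i + of_int (c i)" for i
    using gpos unfolding e_def by (simp add: dq dc)
  have fe: "\<lfloor>e$i\<rfloor> - \<lfloor>p$i\<rfloor> = c i" for i
    unfolding ec by (metis pint(1) add.commute add_diff_cancel_left' floor_of_int of_int_add)
  have ie: "integral_pt e" unfolding integral_pt_def ec
    using ip unfolding integral_pt_def by (simp add: Ints_add)
  have ne: "e \<noteq> p"
  proof
    assume "e = p"
    hence "c i = 0" for i using ec[of i] by simp
    hence "d i = 0" for i using dc by simp
    thus False using g0 unfolding g_def by simp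
  qed
  have eseg: "e \<in> closed_segment p q"
    unfolding closed_segment_def e_def
    apply (rule CollectI, rule exI[of _ "1 / real_of_int g"])
    using gpos by (auto simp: algebra_simps)
  obtain k1 k2 k3 where k: "k1 * c 1 + k2 * c 2 + k3 * c 3 = 1" using bez3[OF cg] by blast
  have prim: "primitive_seg p e"
    unfolding primitive_seg_def
  proof (intro conjI ballI impI)
    fix z assume zs: "z \<in> closed_segment p e" and iz: "integral_pt z"
    then obtain u where u: "0 \<le> u" "u \<le> 1" "z = (1 - u) *\<^sub>R p + u *\<^sub>R e"
      unfolding closed_segment_def by auto
    have zc: "z$i - p$i = u * of_int (c i)" for i unfolding u(3) by (simp add: ec algebra_simps)
    have zi: "u * of_int (c i) \<in> \<int>" for i
      using iz ip zc[of i] unfolding integral_pt_def by (metis Ints_diff)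
    have "u = of_int k1 * (u * of_int (c 1)) + of_int k2 * (u * of_int (c 2)) + of_int k3 * (u * of_int (c 3))"
    proof -
      have "of_int k1 * (u * of_int (c 1)) + of_int k2 * (u * of_int (c 2)) + of_int k3 * (u * of_int (c 3))
          = u * of_int (k1 * c 1 + k2 * c 2 + k3 * c 3)" by (simp add: algebra_simps)
      thus ?thesis using k by simp
    qed
    hence "u \<in> \<int>" using zi by (metis Ints_add Ints_mult Ints_of_int)
    then obtain n where n: "u = of_int n" by (metis Ints_cases)
    hence "n = 0 \<or> n = 1" using u by auto
    hence "u = 0 \<or> u = 1" using n by auto
    thus "z = p \<or> z = e" using u(3) by auto
  qed (use ip ie ne in auto)
  show ?thesis using eseg prim fe cg by auto
qed


lemma lin_lin: "lin l (a *\<^sub>R x + b *\<^sub>R y) = a * lin l x + b * lin l y"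
  "lin l (x - y) = lin l x - lin l y" "lin l (x + y) = lin l x + lin l y"
  by (cases l; simp add: lin_def algebra_simps)+

lemma lin_int:
  assumes "integral_pt x" "integral_pt y"
  shows "lin (a,b,c) (x - y) = of_int (a * (\<lfloor>x$1\<rfloor> - \<lfloor>y$1\<rfloor>) + b * (\<lfloor>x$2\<rfloor> - \<lfloor>y$2\<rfloor>) + c * (\<lfloor>x$3\<rfloor> - \<lfloor>y$3\<rfloor>))"
proof -
  have h: "real_of_int \<lfloor>x$i\<rfloor> = x$i" "real_of_int \<lfloor>y$i\<rfloor> = y$i" for i
    using assms unfolding integral_pt_def by (simp_all add: int_floor)
  show ?thesis by (simp add: lin_def h)
qed

lemma gcd3_nn:
  fixes k a b c :: int
  shows "k \<ge> 0 \<Longrightarrow> gcd (gcd (k*a) (k*b)) (k*c) = k * gcd (gcd a b) c"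
  by (simp add: gcd_mult_left)

lemma gcd3_mult:
  fixes k a b c :: int
  shows "gcd (gcd (k*a) (k*b)) (k*c) = \<bar>k\<bar> * gcd (gcd a b) c"
proof (cases "k \<ge> 0")
  case True
  thus ?thesis by (simp add: gcd_mult_left)
next
  case False
  have "gcd (gcd (k*a) (k*b)) (k*c) = gcd (gcd ((-k)*a) ((-k)*b)) ((-k)*c)" by simp
  also have "\<dots> = (-k) * gcd (gcd a b) c" using False gcd3_nn[of "-k" a b c] by simp
  finally show ?thesis using False by simp
qed

theorem mainTheorem13:
  fixes f :: germ3 and Fn Fn' :: "(real^3) set" and ln ln' :: ivec3
    and p1 p2 q1 q2 :: "real^3" and E1 E2 :: "(real^3) set"
  assumes "convergent_germ f"
    and "two_face (newton_poly f) Fn" and "compact Fn"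
    and "two_face (newton_poly f) Fn'" and "Fn' \<noteq> Fn"
    and "prim_normal (newton_poly f) Fn ln"
    and "prim_normal (newton_poly f) Fn' ln'"
    and "p1 \<noteq> p2" and "Fn \<inter> Fn' = closed_segment p1 p2"
    and "is_edge E1 Fn" and "E1 \<noteq> closed_segment p1 p2" and "p1 \<in> E1" and "q1 \<in> E1"
    and "primitive_seg p1 q1"
    and "is_edge E2 Fn" and "E2 \<noteq> closed_segment p1 p2" and "p2 \<in> E2" and "q2 \<in> E2"
    and "primitive_seg p2 q2"
    and "regular_vertex Fn p1"
  shows "real_of_int (content (cross_i ln ln')) = lin ln' (q1 - p1)
         \<and> (\<exists>k::int. lin ln' (q2 - p2) = of_int k * lin ln' (q1 - p1))"
proof -
  obtain l1 l2 l3 where L: "ln = (l1,l2,l3)" by (cases ln)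
  obtain m1 m2 m3 where M: "ln' = (m1,m2,m3)" by (cases ln')
  define NP where "NP = newton_poly f"
  have FnF: "Fn face_of NP" and aff2: "aff_dim Fn = 2" and FnF': "Fn' face_of NP"
    using assms(2,4) unfolding two_face_def NP_def by auto
  have cl: "content ln = 1" and FnD: "Fn = {x\<in>NP. \<forall>y\<in>NP. lin ln x \<le> lin ln y}"
    using assms(6) unfolding prim_normal_def NP_def by auto
  have FnD': "Fn' = {x\<in>NP. \<forall>y\<in>NP. lin ln' x \<le> lin ln' y}"
    using assms(7) unfolding prim_normal_def NP_def by auto
  have minFn: "\<And>x y. x \<in> Fn \<Longrightarrow> y \<in> NP \<Longrightarrow> lin ln x \<le> lin ln y"
    using FnD by blast
  have minFn': "\<And>x y. x \<in> Fn' \<Longrightarrow> y \<in> NP \<Longrightarrow> lin ln' x \<le> lin ln' y"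
    using FnD' by blast
  have FnN: "Fn \<subseteq> NP" using FnD by blast
  have FnN': "Fn' \<subseteq> NP" using FnD' by blast
  have cFn: "\<And>x y. x \<in> Fn \<Longrightarrow> y \<in> Fn \<Longrightarrow> lin ln x = lin ln y"
    using minFn FnN by (meson antisym subsetD)
  have cFn': "\<And>x y. x \<in> Fn' \<Longrightarrow> y \<in> Fn' \<Longrightarrow> lin ln' x = lin ln' y"
    using minFn' FnN' by (meson antisym subsetD)
  have segF: "closed_segment p1 p2 \<subseteq> Fn" "closed_segment p1 p2 \<subseteq> Fn'" using assms(9) by auto
  have p1F: "p1 \<in> Fn" "p1 \<in> Fn'" "p2 \<in> Fn" "p2 \<in> Fn'" using segF by auto
  have E1F: "E1 \<subseteq> Fn" using assms(10) unfolding is_edge_def by (simp add: face_of_imp_subset)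
  have E2F: "E2 \<subseteq> Fn" using assms(15) unfolding is_edge_def by (simp add: face_of_imp_subset)
  have q1F: "q1 \<in> Fn" "q2 \<in> Fn" using E1F E2F assms(13,18) by auto
  have ints: "integral_pt p1" "integral_pt q1" "integral_pt p2" "integral_pt q2"
    using assms(14,19) unfolding primitive_seg_def by simp_all
  have ex: "\<exists>e'. e' \<in> closed_segment p1 p2 \<and> primitive_seg p1 e' \<and>
      gcd (gcd (\<lfloor>e'$1\<rfloor> - \<lfloor>p1$1\<rfloor>) (\<lfloor>e'$2\<rfloor> - \<lfloor>p1$2\<rfloor>)) (\<lfloor>e'$3\<rfloor> - \<lfloor>p1$3\<rfloor>) = 1"
    by (rule prim_exists[OF ints(1) ints(3) assms(8)])
  then obtain e' where e'all: "e' \<in> closed_segment p1 p2 \<and> primitive_seg p1 e' \<and>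
      gcd (gcd (\<lfloor>e'$1\<rfloor> - \<lfloor>p1$1\<rfloor>) (\<lfloor>e'$2\<rfloor> - \<lfloor>p1$2\<rfloor>)) (\<lfloor>e'$3\<rfloor> - \<lfloor>p1$3\<rfloor>) = 1"
    by (rule exE)
  have e'seg: "e' \<in> closed_segment p1 p2" and e'prim: "primitive_seg p1 e'"
    and e'g: "gcd (gcd (\<lfloor>e'$1\<rfloor> - \<lfloor>p1$1\<rfloor>) (\<lfloor>e'$2\<rfloor> - \<lfloor>p1$2\<rfloor>)) (\<lfloor>e'$3\<rfloor> - \<lfloor>p1$3\<rfloor>) = 1"
    using e'all by simp_all
  have ie': "integral_pt e'" using e'prim unfolding primitive_seg_def by simp
  have e'F: "e' \<in> Fn" "e' \<in> Fn'" using e'seg segF by auto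
  have edge: "is_edge (closed_segment p1 p2) Fn"
  proof -
    have "(Fn \<inter> Fn') face_of Fn"
      by (rule face_of_subset[OF face_of_Int[OF FnF FnF']]) (use FnN in auto)
    moreover have "aff_dim (closed_segment p1 p2) = aff_dim {p1,p2}"
      by (rule aff_dim_affine_hull2[OF affine_hull_closed_segment])
    moreover have "aff_dim {p1,p2} = 1" using assms(8) by simp
    ultimately show ?thesis unfolding is_edge_def using assms(9) by simp
  qed
  have R: "\<forall>E E' w w'. is_edge E Fn \<and> is_edge E' Fn \<and> E \<noteq> E' \<and> p1 \<in> E \<and> p1 \<in> E' \<and>
        w \<in> E \<and> w' \<in> E' \<and> primitive_seg p1 w \<and> primitive_seg p1 w' \<longrightarrow>
        (\<forall>z\<in>affine hull Fn. integral_pt z \<longrightarrow>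
           (\<exists>a b::int. z - p1 = of_int a *\<^sub>R (w - p1) + of_int b *\<^sub>R (w' - p1)))"
    using assms(20) unfolding regular_vertex_def by (rule conjunct2[THEN conjunct2])
  have X: "\<forall>z\<in>affine hull Fn. integral_pt z \<longrightarrow>
           (\<exists>a b::int. z - p1 = of_int a *\<^sub>R (q1 - p1) + of_int b *\<^sub>R (e' - p1))"
    apply (rule R[THEN spec[of _ E1], THEN spec[of _ "closed_segment p1 p2"], THEN spec[of _ q1],
          THEN spec[of _ e'], THEN mp])
    using assms(10,11,12,13,14) edge e'seg e'prim by simp
  have reg: "\<And>z. z \<in> affine hull Fn \<Longrightarrow> integral_pt z \<Longrightarrow>
      \<exists>a b::int. z - p1 = of_int a *\<^sub>R (q1 - p1) + of_int b *\<^sub>R (e' - p1)"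
    using X by blast
  define vl :: "real^3" where "vl = vector [of_int l1, of_int l2, of_int l3]"
  have linv: "lin ln x = vl \<bullet> x" for x
    by (simp add: L lin_def inner_vec_def sum_3 vl_def)
  have vl0: "vl \<noteq> 0"
  proof
    assume "vl = 0"
    hence "l1 = 0" "l2 = 0" "l3 = 0" unfolding vl_def by (auto simp: vec_eq_iff forall3)
    thus False using cl L by (simp add: content_def)
  qed
  define P where "P = {x. vl \<bullet> x = lin ln p1}"
  have AH: "affine hull Fn = P"
  proof (rule affine_dim_equal)
    show "affine (affine hull Fn)" by simp
    show "affine P" unfolding P_def by (rule affine_hyperplane)
    have "p1 \<in> affine hull Fn" by (rule hull_inc[OF p1F(1)])
    thus "affine hull Fn \<noteq> {}" by blast
    have "Fn \<subseteq> P"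
    proof
      fix x assume "x \<in> Fn"
      hence "lin ln x = lin ln p1" using cFn p1F(1) by blast
      thus "x \<in> P" unfolding P_def linv by simp
    qed
    thus "affine hull Fn \<subseteq> P"
      by (rule hull_minimal) (rule \<open>affine P\<close>)
    show "aff_dim (affine hull Fn) = aff_dim P" unfolding P_def using aff2 vl0 by simp
  qed
  have dec: "\<And>z. integral_pt z \<Longrightarrow> lin ln z = lin ln p1 \<Longrightarrow>
      \<exists>a b::int. z - p1 = of_int a *\<^sub>R (q1 - p1) + of_int b *\<^sub>R (e' - p1)"
  proof -
    fix z assume iz: "integral_pt z" and lz: "lin ln z = lin ln p1"
    have "z \<in> P" unfolding P_def using lz linv by simp
    hence "z \<in> affine hull Fn" using AH by simp
    thus "\<exists>a b::int. z - p1 = of_int a *\<^sub>R (q1 - p1) + of_int b *\<^sub>R (e' - p1)" using reg iz by blast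
  qed
  define x1 where "x1 = \<lfloor>e'$1\<rfloor> - \<lfloor>p1$1\<rfloor>"
  define x2 where "x2 = \<lfloor>e'$2\<rfloor> - \<lfloor>p1$2\<rfloor>"
  define x3 where "x3 = \<lfloor>e'$3\<rfloor> - \<lfloor>p1$3\<rfloor>"
  define y1 where "y1 = \<lfloor>q1$1\<rfloor> - \<lfloor>p1$1\<rfloor>"
  define y2 where "y2 = \<lfloor>q1$2\<rfloor> - \<lfloor>p1$2\<rfloor>"
  define y3 where "y3 = \<lfloor>q1$3\<rfloor> - \<lfloor>p1$3\<rfloor>"
  have lin0: "lin ln (e' - p1) = 0" "lin ln (q1 - p1) = 0" "lin ln' (e' - p1) = 0"
    using cFn[OF e'F(1) p1F(1)] cFn[OF q1F(1) p1F(1)] cFn'[OF e'F(2) p1F(2)]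
    by (simp_all add: lin_lin)
  have hle: "lin ln (e' - p1) = real_of_int (l1*x1 + l2*x2 + l3*x3)"
    unfolding L x1_def x2_def x3_def by (rule lin_int[OF ie' ints(1)])
  have le: "l1*x1 + l2*x2 + l3*x3 = 0" using hle lin0(1) by (metis of_int_eq_0_iff)
  have hlw: "lin ln (q1 - p1) = real_of_int (l1*y1 + l2*y2 + l3*y3)"
    unfolding L y1_def y2_def y3_def by (rule lin_int[OF ints(2) ints(1)])
  have lw: "l1*y1 + l2*y2 + l3*y3 = 0" using hlw lin0(2) by (metis of_int_eq_0_iff)
  have hme: "lin ln' (e' - p1) = real_of_int (m1*x1 + m2*x2 + m3*x3)"
    unfolding M x1_def x2_def x3_def by (rule lin_int[OF ie' ints(1)])
  have me: "m1*x1 + m2*x2 + m3*x3 = 0" using hme lin0(3) by (metis of_int_eq_0_iff)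
  define mw where "mw = m1*y1 + m2*y2 + m3*y3"
  have lmw: "lin ln' (q1 - p1) = of_int mw"
    unfolding M y1_def y2_def y3_def mw_def by (rule lin_int[OF ints(2) ints(1)])
  have hp1: "real_of_int \<lfloor>p1$i\<rfloor> = p1$i" "real_of_int \<lfloor>q1$i\<rfloor> = q1$i"
     "real_of_int \<lfloor>e'$i\<rfloor> = e'$i" for i
    using ints(1,2) ie' unfolding integral_pt_def by (simp_all add: int_floor)
  have dec': "\<exists>a b. a*x1+b*y1 = z1 \<and> a*x2+b*y2 = z2 \<and> a*x3+b*y3 = z3"
    if lz: "l1*z1+l2*z2+l3*z3 = 0" for z1 z2 z3
  proof -
    define Z where "Z = p1 + vector [of_int z1, of_int z2, of_int z3]"
    have Zc: "Z$1 = p1$1 + of_int z1" "Z$2 = p1$2 + of_int z2" "Z$3 = p1$3 + of_int z3"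
      unfolding Z_def by simp_all
    have iZ: "integral_pt Z" unfolding integral_pt_def forall3 Zc
      using ints(1) unfolding integral_pt_def by (simp add: Ints_add)
    have "lin ln Z = lin ln p1 + of_int (l1*z1+l2*z2+l3*z3)"
      unfolding L lin_def Zc by (simp add: algebra_simps)
    hence "lin ln Z = lin ln p1" using lz by simp
    then obtain a b :: int where ab: "Z - p1 = of_int a *\<^sub>R (q1 - p1) + of_int b *\<^sub>R (e' - p1)"
      using dec[OF iZ] by blast
    have "(Z - p1)$i = of_int a * (q1$i - p1$i) + of_int b * (e'$i - p1$i)" for i
      unfolding ab by simp
    hence C: "Z$i - p1$i = of_int a * (of_int \<lfloor>q1$i\<rfloor> - of_int \<lfloor>p1$i\<rfloor>)
       + of_int b * (of_int \<lfloor>e'$i\<rfloor> - of_int \<lfloor>p1$i\<rfloor>)" for i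
      by (simp only: hp1 vector_minus_component)
    have "real_of_int z1 = real_of_int (b*x1 + a*y1)" using C[of 1] Zc(1)
      unfolding x1_def y1_def by simp
    moreover have "real_of_int z2 = real_of_int (b*x2 + a*y2)" using C[of 2] Zc(2)
      unfolding x2_def y2_def by simp
    moreover have "real_of_int z3 = real_of_int (b*x3 + a*y3)" using C[of 3] Zc(3)
      unfolding x3_def y3_def by simp
    ultimately show ?thesis by (intro exI[of _ b] exI[of _ a]) (simp only: of_int_eq_iff)
  qed
  have g1: "gcd (gcd l1 l2) l3 = 1" using cl unfolding L content_def by simp
  have C: "\<exists>N. N*N = 1 \<and> l2*m3 - l3*m2 = - N*(m1*y1+m2*y2+m3*y3)*x1
     \<and> l3*m1 - l1*m3 = - N*(m1*y1+m2*y2+m3*y3)*x2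
     \<and> l1*m2 - l2*m1 = - N*(m1*y1+m2*y2+m3*y3)*x3"
    by (rule core[OF g1 le lw me dec'])
  then obtain NN where NN: "NN*NN = 1" and cr: "l2*m3 - l3*m2 = - NN*mw*x1"
     "l3*m1 - l1*m3 = - NN*mw*x2" "l1*m2 - l2*m1 = - NN*mw*x3"
    unfolding mw_def by blast
  have mw0: "mw \<ge> 0"
  proof -
    have "lin ln' p1 \<le> lin ln' q1" using minFn'[OF p1F(2)] q1F(1) FnN by blast
    hence "lin ln' (q1 - p1) \<ge> 0" by (simp add: lin_lin)
    thus ?thesis using lmw by simp
  qed
  have "NN dvd 1" using NN by (metis dvdI)
  hence aN: "\<bar>NN\<bar> = 1" by simp
  have "content (cross_i ln ln') = gcd (gcd (- NN*mw*x1) (- NN*mw*x2)) (- NN*mw*x3)"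
    unfolding L M cross_i_def content_def using cr by simp
  also have "\<dots> = \<bar>- NN*mw\<bar> * gcd (gcd x1 x2) x3" by (rule gcd3_mult)
  also have "\<dots> = mw" using e'g aN mw0 unfolding x1_def x2_def x3_def by (simp add: abs_mult)
  finally have part1: "real_of_int (content (cross_i ln ln')) = lin ln' (q1 - p1)" using lmw by simp
  have part2: "\<exists>k::int. lin ln' (q2 - p2) = of_int k * lin ln' (q1 - p1)"
  proof -
    define Z where "Z = q2 - p2 + p1"
    have iZ: "integral_pt Z" using ints(1,3,4) unfolding Z_def integral_pt_def
      by (simp add: Ints_add Ints_diff)
    have "lin ln Z = lin ln q2 - lin ln p2 + lin ln p1" unfolding Z_def by (simp add: lin_lin)
    hence "lin ln Z = lin ln p1" using cFn[OF q1F(2) p1F(3)] by simp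
    then obtain a b :: int where ab: "Z - p1 = of_int a *\<^sub>R (q1 - p1) + of_int b *\<^sub>R (e' - p1)"
      using dec[OF iZ] by blast
    have "q2 - p2 = Z - p1" unfolding Z_def by simp
    hence "lin ln' (q2 - p2) = lin ln' (of_int a *\<^sub>R (q1 - p1) + of_int b *\<^sub>R (e' - p1))"
      using ab by simp
    also have "\<dots> = of_int a * lin ln' (q1 - p1) + of_int b * lin ln' (e' - p1)" by (rule lin_lin(1))
    finally have "lin ln' (q2 - p2) = of_int a * lin ln' (q1 - p1) + of_int b * lin ln' (e' - p1)" .
    thus ?thesis using lin0(3) by auto
  qed
  show ?thesis using part1 part2 by blast
qed
end
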